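(* Let $S^0$ be an adequate semigroup with semilattice of idempotents $E^0$, let $I$ be a left regular band having $E^0$ as a semilattice transversal, and suppose there is a left action $(x,e)\mapsto x\ast e$ of $S^0$ on $I$ (so $(xy)\ast e=x\ast(y\ast e)$) with $x\ast(ef)=(x\ast e)(x\ast f)$ for all $x\in S^0$, $e,f\in I$. Let $W=\{(e,x)\in I\times S^0: e\in L_{x^+}\}$ with multiplication $(e,x)(g,y)=(e(x\ast g),xy)$, and suppose that $x\ast y^+=(xy)^+$ for all $x,y\in S^0$. Then $W$ is a left abundant semigroup and for every $w\in W$ the $\mathcal{R}^\ast$-class of $w$ in $W$ contains exactly one idempotent.
   Context: For a semigroup $T$, $T^1$ is $T$ with an identity adjoined; $a\,\mathcal{R}^\ast\,b$ iff for all $x,y\in T^1$, $xa=ya\Leftrightarrow xb=yb$; $\mathcal{L}^\ast$ is defined dually. $T$ is left abundant if each $\mathcal{R}^\ast$-class contains an idempotent, abundant if also each $\mathcal{L}^\ast$-class does, and adequate if abundant with commuting idempotents; in an adequate semigroup $x^+$ is the unique idempotent $\mathcal{R}^\ast$-related to $x$. A left regular band satisfies $xyx=xy$; $E^0$ is a semilattice transversal of $I$ if $E^0$ is a subsemilattice of $I$ and each element of $I$ has exactly one inverse in $E^0$. For $x\in E^0$, $L_x$ is the $\mathcal{L}$-class of $x$ in $I$. *)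

theory Defs
  imports Main
begin

text \<open>Semigroups are given by a carrier set T and a binary operation m.
  The monoid T^1 is modelled by option: None is the adjoined identity.\<close>

definition semigroup_on :: "'a set \<Rightarrow> ('a \<Rightarrow> 'a \<Rightarrow> 'a) \<Rightarrow> bool" where
  "semigroup_on T m \<longleftrightarrow> (\<forall>a\<in>T. \<forall>b\<in>T. m a b \<in> T) \<and>
     (\<forall>a\<in>T. \<forall>b\<in>T. \<forall>c\<in>T. m (m a b) c = m a (m b c))"

definition one_adj :: "'a set \<Rightarrow> 'a option set" where
  "one_adj T = insert None (Some ` T)"

fun lmul1 :: "('a \<Rightarrow> 'a \<Rightarrow> 'a) \<Rightarrow> 'a option \<Rightarrow> 'a \<Rightarrow> 'a" where
  "lmul1 m None a = a"
| "lmul1 m (Some x) a = m x a"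

fun rmul1 :: "('a \<Rightarrow> 'a \<Rightarrow> 'a) \<Rightarrow> 'a \<Rightarrow> 'a option \<Rightarrow> 'a" where
  "rmul1 m a None = a"
| "rmul1 m a (Some x) = m a x"

definition idem :: "'a set \<Rightarrow> ('a \<Rightarrow> 'a \<Rightarrow> 'a) \<Rightarrow> 'a \<Rightarrow> bool" where
  "idem T m e \<longleftrightarrow> e \<in> T \<and> m e e = e"

definition Rstar :: "'a set \<Rightarrow> ('a \<Rightarrow> 'a \<Rightarrow> 'a) \<Rightarrow> 'a \<Rightarrow> 'a \<Rightarrow> bool" where
  "Rstar T m a b \<longleftrightarrow> a \<in> T \<and> b \<in> T \<and>
     (\<forall>x\<in>one_adj T. \<forall>y\<in>one_adj T. lmul1 m x a = lmul1 m y a \<longleftrightarrow> lmul1 m x b = lmul1 m y b)"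

definition Lstar :: "'a set \<Rightarrow> ('a \<Rightarrow> 'a \<Rightarrow> 'a) \<Rightarrow> 'a \<Rightarrow> 'a \<Rightarrow> bool" where
  "Lstar T m a b \<longleftrightarrow> a \<in> T \<and> b \<in> T \<and>
     (\<forall>x\<in>one_adj T. \<forall>y\<in>one_adj T. rmul1 m a x = rmul1 m a y \<longleftrightarrow> rmul1 m b x = rmul1 m b y)"

definition left_abundant :: "'a set \<Rightarrow> ('a \<Rightarrow> 'a \<Rightarrow> 'a) \<Rightarrow> bool" where
  "left_abundant T m \<longleftrightarrow> semigroup_on T m \<and> (\<forall>a\<in>T. \<exists>e. idem T m e \<and> Rstar T m a e)"

definition abundant :: "'a set \<Rightarrow> ('a \<Rightarrow> 'a \<Rightarrow> 'a) \<Rightarrow> bool" where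
  "abundant T m \<longleftrightarrow> left_abundant T m \<and> (\<forall>a\<in>T. \<exists>e. idem T m e \<and> Lstar T m a e)"

definition adequate :: "'a set \<Rightarrow> ('a \<Rightarrow> 'a \<Rightarrow> 'a) \<Rightarrow> bool" where
  "adequate T m \<longleftrightarrow> abundant T m \<and>
     (\<forall>e f. idem T m e \<and> idem T m f \<longrightarrow> m e f = m f e)"

definition plus :: "'a set \<Rightarrow> ('a \<Rightarrow> 'a \<Rightarrow> 'a) \<Rightarrow> 'a \<Rightarrow> 'a" where
  "plus T m x = (THE e. idem T m e \<and> Rstar T m x e)"

definition left_regular_band :: "'a set \<Rightarrow> ('a \<Rightarrow> 'a \<Rightarrow> 'a) \<Rightarrow> bool" where
  "left_regular_band T m \<longleftrightarrow> semigroup_on T m \<and> (\<forall>a\<in>T. m a a = a) \<and>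
     (\<forall>x\<in>T. \<forall>y\<in>T. m (m x y) x = m x y)"

definition inverse_of :: "('a \<Rightarrow> 'a \<Rightarrow> 'a) \<Rightarrow> 'a \<Rightarrow> 'a \<Rightarrow> bool" where
  "inverse_of m a b \<longleftrightarrow> m (m a b) a = a \<and> m (m b a) b = b"

definition semilattice_transversal :: "'a set \<Rightarrow> 'a set \<Rightarrow> ('a \<Rightarrow> 'a \<Rightarrow> 'a) \<Rightarrow> bool" where
  "semilattice_transversal E I m \<longleftrightarrow> E \<subseteq> I \<and>
     (\<forall>e\<in>E. \<forall>f\<in>E. m e f \<in> E \<and> m e f = m f e) \<and> (\<forall>e\<in>E. m e e = e) \<and>
     (\<forall>a\<in>I. \<exists>!b. b \<in> E \<and> inverse_of m a b)"

definition Lrel :: "'a set \<Rightarrow> ('a \<Rightarrow> 'a \<Rightarrow> 'a) \<Rightarrow> 'a \<Rightarrow> 'a \<Rightarrow> bool" where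
  "Lrel T m a b \<longleftrightarrow> a \<in> T \<and> b \<in> T \<and>
     (\<exists>u\<in>one_adj T. lmul1 m u b = a) \<and> (\<exists>v\<in>one_adj T. lmul1 m v a = b)"

definition Wset :: "'a set \<Rightarrow> ('a \<Rightarrow> 'a \<Rightarrow> 'a) \<Rightarrow> 'a set \<Rightarrow> ('a \<Rightarrow> 'a \<Rightarrow> 'a) \<Rightarrow> ('a \<times> 'a) set" where
  "Wset S mS I mI = {(e, x). e \<in> I \<and> x \<in> S \<and> Lrel I mI e (plus S mS x)}"

definition Wmul :: "('a \<Rightarrow> 'a \<Rightarrow> 'a) \<Rightarrow> ('a \<Rightarrow> 'a \<Rightarrow> 'a) \<Rightarrow> ('a \<Rightarrow> 'a \<Rightarrow> 'a)
     \<Rightarrow> 'a \<times> 'a \<Rightarrow> 'a \<times> 'a \<Rightarrow> 'a \<times> 'a" where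
  "Wmul mS mI act p q = (mI (fst p) (act (snd p) (fst q)), mS (snd p) (snd q))"

end

theory Submission
  imports Defs
begin

lemma one_adj_iff: "u \<in> one_adj T \<longleftrightarrow> u = None \<or> (\<exists>t\<in>T. u = Some t)"
  by (auto simp: one_adj_def)

lemma Rstar_sym: "Rstar T m a b \<Longrightarrow> Rstar T m b a"
  unfolding Rstar_def by blast

lemma Rstar_trans: "Rstar T m a b \<Longrightarrow> Rstar T m b c \<Longrightarrow> Rstar T m a c"
  unfolding Rstar_def by blast

lemma Rstar_refl: "a \<in> T \<Longrightarrow> Rstar T m a a"
  unfolding Rstar_def by blast

lemma Rstar_SS: "Rstar T m a b \<Longrightarrow> z \<in> T \<Longrightarrow> z' \<in> T \<Longrightarrow>
    (m z a = m z' a \<longleftrightarrow> m z b = m z' b)"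
  unfolding Rstar_def one_adj_def
  by (metis imageI insertCI lmul1.simps(2))

lemma Rstar_NS: "Rstar T m a b \<Longrightarrow> z \<in> T \<Longrightarrow>
    (a = m z a \<longleftrightarrow> b = m z b)"
  unfolding Rstar_def one_adj_def
  by (metis imageI insertCI lmul1.simps)

lemma Rstar_idem: "Rstar T m e f \<Longrightarrow> idem T m e \<Longrightarrow> idem T m f \<Longrightarrow> m f e = e"
  using Rstar_NS[of T m e f f]
  by (metis Rstar_def idem_def)

locale Wset_loc =
  fixes S I E0 :: "'a set"
    and mS mI act :: "'a \<Rightarrow> 'a \<Rightarrow> 'a"
  assumes S_adeq: "adequate S mS"
    and E0_def: "E0 = {e. idem S mS e}"
    and I_lrb: "left_regular_band I mI"
    and transv: "semilattice_transversal E0 I mI"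
    and E0_sub: "\<forall>e\<in>E0. \<forall>f\<in>E0. mI e f = mS e f"
    and act_closed: "\<forall>x\<in>S. \<forall>e\<in>I. act x e \<in> I"
    and act_assoc: "\<forall>x\<in>S. \<forall>y\<in>S. \<forall>e\<in>I. act (mS x y) e = act x (act y e)"
    and act_hom: "\<forall>x\<in>S. \<forall>e\<in>I. \<forall>f\<in>I. act x (mI e f) = mI (act x e) (act x f)"
    and act_plus: "\<forall>x\<in>S. \<forall>y\<in>S. act x (plus S mS y) = plus S mS (mS x y)"
begin

abbreviation p where "p x \<equiv> plus S mS x"

lemma S_semi: "semigroup_on S mS"
  using S_adeq by (simp add: adequate_def abundant_def left_abundant_def)

lemma S_cl: "x \<in> S \<Longrightarrow> y \<in> S \<Longrightarrow> mS x y \<in> S"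
  using S_semi by (simp add: semigroup_on_def)

lemma S_as: "x \<in> S \<Longrightarrow> y \<in> S \<Longrightarrow> z \<in> S \<Longrightarrow> mS (mS x y) z = mS x (mS y z)"
  using S_semi by (simp add: semigroup_on_def)

lemma comm: "idem S mS e \<Longrightarrow> idem S mS f \<Longrightarrow> mS e f = mS f e"
  using S_adeq by (simp add: adequate_def)

lemma idem_uniq: "Rstar S mS x e \<Longrightarrow> Rstar S mS x f \<Longrightarrow> idem S mS e \<Longrightarrow> idem S mS f \<Longrightarrow> e = f"
proof -
  assume a: "Rstar S mS x e" "Rstar S mS x f" "idem S mS e" "idem S mS f"
  hence ef: "Rstar S mS e f" by (meson Rstar_sym Rstar_trans)
  have 1: "mS f e = e" using Rstar_idem[OF ef a(3,4)] .
  have 2: "mS e f = f" using Rstar_idem[OF Rstar_sym[OF ef] a(4,3)] .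
  show "e = f" using 1 2 comm[OF a(3,4)] by simp
qed

lemma plus_props: "x \<in> S \<Longrightarrow> idem S mS (p x) \<and> Rstar S mS x (p x)"
proof -
  assume x: "x \<in> S"
  obtain e where e: "idem S mS e" "Rstar S mS x e"
    using S_adeq x by (auto simp: adequate_def abundant_def left_abundant_def)
  show ?thesis unfolding plus_def
    by (rule theI[of _ e]) (use e idem_uniq in blast)+
qed

lemma plus_idem: "idem S mS e \<Longrightarrow> p e = e"
  using plus_props idem_uniq Rstar_refl by (metis idem_def)

lemma plus_S: "x \<in> S \<Longrightarrow> p x \<in> S"
  using plus_props idem_def by metis

lemma plus_left: "x \<in> S \<Longrightarrow> mS (p x) x = x"
proof -
  assume x: "x \<in> S"
  have "Rstar S mS x (p x)" "idem S mS (p x)" using plus_props[OF x] by auto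
  thus ?thesis using Rstar_NS[of S mS x "p x" "p x"] by (auto simp: idem_def)
qed

lemma plus_mult: "x \<in> S \<Longrightarrow> y \<in> S \<Longrightarrow> mS (p x) (p (mS x y)) = p (mS x y)"
proof -
  assume x: "x \<in> S" and y: "y \<in> S"
  have xy: "mS x y \<in> S" using S_cl x y .
  have "mS (p x) (mS x y) = mS x y" using S_as[OF plus_S[OF x] x y] plus_left[OF x] by simp
  thus ?thesis using Rstar_NS[of S mS "mS x y" "p (mS x y)" "p x"] plus_props[OF xy] plus_S[OF x]
    by metis
qed

lemma I_cl: "a \<in> I \<Longrightarrow> b \<in> I \<Longrightarrow> mI a b \<in> I"
  using I_lrb by (simp add: left_regular_band_def semigroup_on_def)

lemma I_as: "a \<in> I \<Longrightarrow> b \<in> I \<Longrightarrow> c \<in> I \<Longrightarrow> mI (mI a b) c = mI a (mI b c)"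
  using I_lrb by (simp add: left_regular_band_def semigroup_on_def)

lemma I_id: "a \<in> I \<Longrightarrow> mI a a = a"
  using I_lrb by (simp add: left_regular_band_def)

definition LL where "LL a b \<longleftrightarrow> a \<in> I \<and> b \<in> I \<and> mI a b = a \<and> mI b a = b"

lemma Lrel_LL: "Lrel I mI a b \<longleftrightarrow> LL a b"
proof
  assume L: "Lrel I mI a b"
  then obtain u v where u: "u \<in> one_adj I" "lmul1 mI u b = a" and v: "v \<in> one_adj I" "lmul1 mI v a = b"
    and ab: "a \<in> I" "b \<in> I" by (auto simp: Lrel_def)
  have 1: "mI a b = a"
  proof (cases u)
    case None thus ?thesis using u ab I_id by simp
  next
    case (Some t) thus ?thesis using u ab I_as I_id by (auto simp: one_adj_iff)
  qed
  have 2: "mI b a = b"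
  proof (cases v)
    case None thus ?thesis using v ab I_id by simp
  next
    case (Some t) thus ?thesis using v ab I_as I_id by (auto simp: one_adj_iff)
  qed
  show "LL a b" using 1 2 ab by (simp add: LL_def)
next
  assume "LL a b"
  thus "Lrel I mI a b" unfolding Lrel_def LL_def one_adj_def
    by (metis imageI insertCI lmul1.simps(2))
qed

lemma LL_sym: "LL a b \<Longrightarrow> LL b a" by (auto simp: LL_def)

lemma LL_trans: "LL a b \<Longrightarrow> LL b c \<Longrightarrow> LL a c"
  unfolding LL_def by (metis I_as)

lemma LL_act: "x \<in> S \<Longrightarrow> LL a b \<Longrightarrow> LL (act x a) (act x b)"
  unfolding LL_def using act_closed act_hom by metis

lemma E0_I: "E0 \<subseteq> I" using transv by (simp add: semilattice_transversal_def)

lemma plus_E0: "x \<in> S \<Longrightarrow> p x \<in> E0" using plus_props E0_def by auto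

lemma plus_I: "x \<in> S \<Longrightarrow> p x \<in> I" using plus_E0 E0_I by auto

lemma Wmul_simp: "Wmul mS mI act (e, x) (g, y) = (mI e (act x g), mS x y)"
  by (simp add: Wmul_def)

lemma W_iff: "(e, x) \<in> Wset S mS I mI \<longleftrightarrow> e \<in> I \<and> x \<in> S \<and> LL e (p x)"
  by (simp add: Wset_def Lrel_LL)

lemma W_closed:
  assumes "(e, x) \<in> Wset S mS I mI" "(g, y) \<in> Wset S mS I mI"
  shows "Wmul mS mI act (e, x) (g, y) \<in> Wset S mS I mI"
proof -
  have e: "e \<in> I" "x \<in> S" "LL e (p x)" and g: "g \<in> I" "y \<in> S" "LL g (p y)"
    using assms W_iff by auto
  define h where "h = act x g"
  define k where "k = p (mS x y)"
  have xy: "mS x y \<in> S" using S_cl e g by auto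
  have hk: "LL h k" using LL_act[OF e(2) g(3)] act_plus e g unfolding h_def k_def by auto
  have kE: "k \<in> E0" "p x \<in> E0" using plus_E0 xy e unfolding k_def by auto
  have kp: "mI k (p x) = k"
  proof -
    have "mI k (p x) = mS k (p x)" using E0_sub kE by auto
    also have "\<dots> = mS (p x) k" using comm kE E0_def by auto
    also have "\<dots> = k" using plus_mult e g unfolding k_def by auto
    finally show ?thesis .
  qed
  have hI: "h \<in> I" "k \<in> I" using hk LL_def by auto
  have "LL (mI e h) k"
    unfolding LL_def
  proof (intro conjI)
    show "mI e h \<in> I" using I_cl e hI by auto
    show "k \<in> I" by fact
    show "mI (mI e h) k = mI e h" using I_as e hI hk by (simp add: LL_def)
    have "mI k e = mI (mI k (p x)) e" using kp by simp
    also have "\<dots> = k" using I_as kp hI e plus_I[OF e(2)] by (metis LL_def)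
    finally have "mI k e = k" .
    thus "mI k (mI e h) = k" using I_as e hI hk by (metis LL_def)
  qed
  thus ?thesis using W_iff Wmul_simp I_cl e hI xy unfolding h_def k_def by auto
qed

lemma W_assoc:
  assumes "(e, x) \<in> Wset S mS I mI" "(g, y) \<in> Wset S mS I mI" "(f, z) \<in> Wset S mS I mI"
  shows "Wmul mS mI act (Wmul mS mI act (e, x) (g, y)) (f, z) =
         Wmul mS mI act (e, x) (Wmul mS mI act (g, y) (f, z))"
proof -
  have a: "e \<in> I" "x \<in> S" "g \<in> I" "y \<in> S" "f \<in> I" "z \<in> S" using assms W_iff by auto
  show ?thesis using a by (simp add: Wmul_simp S_as I_as act_closed act_assoc act_hom I_cl)
qed

lemma W_semi: "semigroup_on (Wset S mS I mI) (Wmul mS mI act)"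
  unfolding semigroup_on_def using W_closed W_assoc by fast

abbreviation W where "W \<equiv> Wset S mS I mI"
abbreviation mW where "mW \<equiv> Wmul mS mI act"

lemma W_idem_plus:
  assumes w: "(e, x) \<in> W"
  shows "idem W mW (e, p x) \<and> Rstar W mW (e, x) (e, p x)"
proof -
  have e: "e \<in> I" "x \<in> S" "LL e (p x)" using w W_iff by auto
  have px: "p x \<in> S" "idem S mS (p x)" "p (p x) = p x" "Rstar S mS x (p x)"
  proof -
    show "p x \<in> S" using plus_S e(2) .
    show i: "idem S mS (p x)" using plus_props e(2) by blast
    show "p (p x) = p x" using plus_idem[OF i] .
    show "Rstar S mS x (p x)" using plus_props e(2) by blast
  qed
  have w2: "(e, p x) \<in> W" using W_iff e px by auto
  have "LL (act (p x) e) (act (p x) (p x))" using LL_act px e by auto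
  moreover have "act (p x) (p x) = p x" using act_plus px by (metis idem_def)
  ultimately have "LL (act (p x) e) (p x)" by simp
  hence "LL (act (p x) e) e" using LL_trans LL_sym[OF e(3)] by blast
  hence "mI e (act (p x) e) = e" using LL_sym by (auto simp: LL_def)
  hence id: "idem W mW (e, p x)" using w2 px by (auto simp: idem_def Wmul_simp)
  have "Rstar W mW (e, x) (e, p x)"
    unfolding Rstar_def
  proof (intro conjI ballI)
    show "(e, x) \<in> W" "(e, p x) \<in> W" using w w2 by auto
    fix u v assume u: "u \<in> one_adj W" and v: "v \<in> one_adj W"
    show "lmul1 mW u (e, x) = lmul1 mW v (e, x) \<longleftrightarrow> lmul1 mW u (e, p x) = lmul1 mW v (e, p x)"
    proof (cases u)
      case None
      show ?thesis
      proof (cases v)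
        case None thus ?thesis using \<open>u = None\<close> by simp
      next
        case (Some t)
        hence "t \<in> W" using v by (simp add: one_adj_iff)
        then obtain f z where t: "t = (f, z)" "(f, z) \<in> W" by (metis surj_pair)
        hence z: "z \<in> S" using W_iff by auto
        show ?thesis using None Some t Rstar_NS[OF px(4) z] by (auto simp: Wmul_simp)
      qed
    next
      case (Some t)
      hence "t \<in> W" using u by (simp add: one_adj_iff)
        then obtain f z where t: "t = (f, z)" "(f, z) \<in> W" by (metis surj_pair)
      hence z: "z \<in> S" using W_iff by auto
      show ?thesis
      proof (cases v)
        case None thus ?thesis using Some t Rstar_NS[OF px(4) z] by (auto simp: Wmul_simp)
      next
        case (Some t')
        hence "t' \<in> W" using v by (simp add: one_adj_iff)
        then obtain f' z' where t': "t' = (f', z')" "(f', z') \<in> W" by (metis surj_pair)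
        hence z': "z' \<in> S" using W_iff by auto
        show ?thesis using \<open>u = Some t\<close> Some t t' Rstar_SS[OF px(4) z z'] by (auto simp: Wmul_simp)
      qed
    qed
  qed
  thus ?thesis using id by auto
qed

lemma W_uniq:
  assumes w: "(e, x) \<in> W" and g: "idem W mW (g, y)" and R: "Rstar W mW (e, x) (g, y)"
  shows "(g, y) = (e, p x)"
proof -
  have e: "e \<in> I" "x \<in> S" "LL e (p x)" using w W_iff by auto
  have gw: "(g, y) \<in> W" using g unfolding idem_def by blast
  have gy: "g \<in> I" "y \<in> S" "LL g (p y)" using gw W_iff by auto
  have ip: "idem W mW (e, p x)" "Rstar W mW (e, x) (e, p x)" using W_idem_plus w by auto
  have R2: "Rstar W mW (e, p x) (g, y)" using Rstar_trans[OF Rstar_sym[OF ip(2)] R] .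
  have a1: "mW (g, y) (e, p x) = (e, p x)" using Rstar_idem[OF R2 ip(1) g] .
  have a2: "mW (e, p x) (g, y) = (g, y)" using Rstar_idem[OF Rstar_sym[OF R2] g ip(1)] .
  have "mW (g, y) (g, y) = (g, y)" using g by (simp add: idem_def)
  hence "mS y y = y" unfolding Wmul_simp by simp
  hence yi: "idem S mS y" using gy by (simp add: idem_def)
  have pxi: "idem S mS (p x)" using plus_props e by auto
  have b1: "mS y (p x) = p x" "mI g (act y e) = e" using a1 unfolding Wmul_simp by simp_all
  have b2: "mS (p x) y = y" using a2 unfolding Wmul_simp by simp
  have "y = p x" using b1(1) b2 comm[OF yi pxi] by simp
  hence py: "p y = p x" using plus_idem[OF pxi] by (rule ssubst)
  have "LL (act (p x) e) (act (p x) (p x))" using LL_act plus_S e by auto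
  moreover have "act (p x) (p x) = p x"
  proof -
    have "act (p x) (p x) = act (p x) (p (p x))" using plus_idem[OF pxi] by simp
    also have "\<dots> = p (mS (p x) (p x))" using act_plus plus_S[OF e(2)] by blast
    also have "\<dots> = p x" using pxi plus_idem[OF pxi] by (simp add: idem_def)
    finally show ?thesis .
  qed
  ultimately have "LL (act (p x) e) (p x)" by simp
  hence "LL (act (p x) e) g" using LL_trans LL_sym[OF gy(3)] py by simp
  hence "mI g (act (p x) e) = g" using LL_sym by (auto simp: LL_def)
  moreover have "mI g (act y e) = e" using b1(2) .
  ultimately have "e = g" using \<open>y = p x\<close> by simp
  thus ?thesis using \<open>y = p x\<close> by simp
qed

lemma main: "left_abundant W mW \<and> (\<forall>w\<in>W. \<exists>!e. idem W mW e \<and> Rstar W mW w e)"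
proof -
  have "\<forall>w\<in>W. idem W mW (fst w, p (snd w)) \<and> Rstar W mW w (fst w, p (snd w))"
    using W_idem_plus by auto
  moreover have "\<forall>w\<in>W. \<forall>e. idem W mW e \<and> Rstar W mW w e \<longrightarrow> e = (fst w, p (snd w))"
    using W_uniq by (metis prod.collapse)
  ultimately show ?thesis using W_semi unfolding left_abundant_def by blast
qed

end

theorem lemma3p2:
  fixes S I E0 :: "'a set"
    and mS mI act :: "'a \<Rightarrow> 'a \<Rightarrow> 'a"
  assumes S_adeq: "adequate S mS"
    and E0_def: "E0 = {e. idem S mS e}"
    and I_lrb: "left_regular_band I mI"
    and transv: "semilattice_transversal E0 I mI"
    and E0_sub: "\<forall>e\<in>E0. \<forall>f\<in>E0. mI e f = mS e f"
    and act_closed: "\<forall>x\<in>S. \<forall>e\<in>I. act x e \<in> I"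
    and act_assoc: "\<forall>x\<in>S. \<forall>y\<in>S. \<forall>e\<in>I. act (mS x y) e = act x (act y e)"
    and act_hom: "\<forall>x\<in>S. \<forall>e\<in>I. \<forall>f\<in>I. act x (mI e f) = mI (act x e) (act x f)"
    and act_plus: "\<forall>x\<in>S. \<forall>y\<in>S. act x (plus S mS y) = plus S mS (mS x y)"
  shows "left_abundant (Wset S mS I mI) (Wmul mS mI act) \<and>
         (\<forall>w\<in>Wset S mS I mI. \<exists>!e. idem (Wset S mS I mI) (Wmul mS mI act) e \<and>
              Rstar (Wset S mS I mI) (Wmul mS mI act) w e)"
proof -
  interpret Wset_loc S I E0 mS mI act
    by (unfold_locales; fact)
  show ?thesis by (rule main)
qed

end
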